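(* Let $n\ge3$, $t_1<\dots<t_n$, and for $j=1,\dots,n-1$ let $\xi_j\in\mathbb{R}$ and $\varphi_j=\Phi_{(\xi_j,-\xi_j)}$. Let $H_1,\dots,H_n$ be the associated generalized hat functions and $\mathcal{H}_n$ their span. Then the matrix $(s_{i,j})$ with $s_{i,j}=\int_{t_1}^{t_n}H_i(t)H_j(t)\,dt$ is row diagonally dominant, and the orthogonal projection $P^{\mathcal{H}_n}$ (for the unweighted $L^2$ inner product on $[t_1,t_n]$) satisfies $\|P^{\mathcal{H}_n}\|_{op}\le4$.
   Context: $\Phi_{(\xi,-\xi)}(t)=\frac{\sinh(\xi t)}{\xi}$ for $\xi\ne0$ and $\Phi_{(0,0)}(t)=t$. Generalized hat functions: for $2\le j\le n-1$, $H_j(t)=\frac{\varphi_{j-1}(t-t_{j-1})}{\varphi_{j-1}(t_j-t_{j-1})}$ on $[t_{j-1},t_j]$, $H_j(t)=\frac{\varphi_j(t-t_{j+1})}{\varphi_j(t_j-t_{j+1})}$ on $[t_j,t_{j+1}]$, $0$ elsewhere; $H_1=\frac{\varphi_1(t-t_2)}{\varphi_1(t_1-t_2)}$ on $[t_1,t_2]$, $0$ elsewhere; $H_n=\frac{\varphi_{n-1}(t-t_{n-1})}{\varphi_{n-1}(t_n-t_{n-1})}$ on $[t_{n-1},t_n]$, $0$ elsewhere. $\|P^{\mathcal{H}_n}\|_{op}=\sup_{f\ne0}\|P^{\mathcal{H}_n}f\|_\infty/\|f\|_\infty$ on $C[t_1,t_n]$. Row diagonally dominant: there is $c\in(0,1)$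 with $|s_{j-1,j}|+|s_{j,j+1}|\le c|s_{j,j}|$ for all $j$, where $s_{0,1}=s_{n,n+1}=0$. *)

theory Defs
  imports "HOL-Analysis.Analysis"
begin

definition Phi :: "real \<Rightarrow> real \<Rightarrow> real" where
  "Phi \<xi> x = (if \<xi> = 0 then x else sinh (\<xi> * x) / \<xi>)"

definition hat :: "nat \<Rightarrow> (nat \<Rightarrow> real) \<Rightarrow> (nat \<Rightarrow> real) \<Rightarrow> nat \<Rightarrow> real \<Rightarrow> real" where
  "hat n tt \<xi> j x =
     (if 2 \<le> j \<and> tt (j - 1) \<le> x \<and> x \<le> tt j then
        Phi (\<xi> (j - 1)) (x - tt (j - 1)) / Phi (\<xi> (j - 1)) (tt j - tt (j - 1))
      else if j \<le> n - 1 \<and> tt j \<le> x \<and> x \<le> tt (j + 1) then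
        Phi (\<xi> j) (x - tt (j + 1)) / Phi (\<xi> j) (tt j - tt (j + 1))
      else 0)"

definition gram :: "nat \<Rightarrow> (nat \<Rightarrow> real) \<Rightarrow> (nat \<Rightarrow> real) \<Rightarrow> nat \<Rightarrow> nat \<Rightarrow> real" where
  "gram n tt \<xi> i j = integral {tt 1..tt n} (\<lambda>x. hat n tt \<xi> i x * hat n tt \<xi> j x)"

definition row_diag_dominant :: "nat \<Rightarrow> (nat \<Rightarrow> nat \<Rightarrow> real) \<Rightarrow> bool" where
  "row_diag_dominant n s \<longleftrightarrow> (\<exists>c. 0 < c \<and> c < 1 \<and>
     (\<forall>j\<in>{1..n}. (if j = 1 then 0 else \<bar>s (j - 1) j\<bar>) + (if j = n then 0 else \<bar>s j (j + 1)\<bar>)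
                    \<le> c * \<bar>s j j\<bar>))"

text \<open>Span of the hat functions (as functions on the reals; only values on [t_1,t_n] matter).\<close>
definition hat_span :: "nat \<Rightarrow> (nat \<Rightarrow> real) \<Rightarrow> (nat \<Rightarrow> real) \<Rightarrow> (real \<Rightarrow> real) set" where
  "hat_span n tt \<xi> = {g. \<exists>a::nat \<Rightarrow> real. \<forall>x. g x = (\<Sum>j=1..n. a j * hat n tt \<xi> j x)}"

definition is_orth_proj :: "nat \<Rightarrow> (nat \<Rightarrow> real) \<Rightarrow> (nat \<Rightarrow> real) \<Rightarrow> (real \<Rightarrow> real) \<Rightarrow> (real \<Rightarrow> real) \<Rightarrow> bool" where
  "is_orth_proj n tt \<xi> f g \<longleftrightarrow> g \<in> hat_span n tt \<xi> \<and>
     (\<forall>h\<in>hat_span n tt \<xi>. integral {tt 1..tt n} (\<lambda>x. (f x - g x) * h x) = 0)"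

end

theory Submission
  imports Defs "Jordan_Normal_Form.Determinant"
begin



lemma ftc_real:
  fixes F f :: "real \<Rightarrow> real"
  assumes "a \<le> b" "\<And>x. (F has_real_derivative f x) (at x)"
  shows "(f has_integral (F b - F a)) {a..b}"
  apply (rule fundamental_theorem_of_calculus[OF assms(1)])
  using assms(2) by (metis has_field_derivative_at_within has_real_derivative_iff_has_vector_derivative)

lemma sinh_ge_self: "0 \<le> (x::real) \<Longrightarrow> x \<le> sinh x"
  using real_le_x_sinh[of x] by (simp add: sinh_field_def exp_minus)

lemma core_ineq:
  fixes k :: real assumes "0 < k"
  shows "(cosh k - 1) * sinh k \<le> 2 * (sinh k - k) * (cosh k + 1)"
proof -
  define m where "m = k/2"
  have k: "k = 2*m" using m_def by simp
  have m0: "0 \<le> m" using assms m_def by simp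
  have S: "sinh k = 2 * sinh m * cosh m" by (simp add: k sinh_double)
  have K: "cosh k = 2 * cosh m ^ 2 - 1" using cosh_double[of m] cosh_square_eq[of m] by (simp add: k)
  have sm: "m \<le> sinh m" by (rule sinh_ge_self[OF m0])
  have c1: "2 * cosh m \<le> cosh m ^ 2 + 1" 
  proof -
    have "0 \<le> (cosh m - 1)^2" by simp
    thus ?thesis by (simp add: power2_eq_square algebra_simps)
  qed
  have s0: "0 \<le> sinh m" using m0 by simp
  have c0: "0 < cosh m" by simp
  have key: "2 * m * cosh m \<le> sinh m * (cosh m ^ 2 + 1)"
  proof -
    have "2*m* cosh m \<le> 2 * sinh m * cosh m" using sm c0 by simp
    also have "\<dots> = sinh m * (2 * cosh m)" by simp
    also have "\<dots> \<le> sinh m * (cosh m ^ 2 + 1)" by (rule mult_left_mono[OF c1 s0])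
    finally show ?thesis .
  qed
  have sq: "sinh m ^ 2 = cosh m ^ 2 - 1" by (rule sinh_square_eq)
  have eq: "2 * (sinh k - k) * (cosh k + 1) - (cosh k - 1) * sinh k
      = 4 * cosh m * (sinh m * (cosh m ^ 2 + 1) - 2 * m * cosh m)"
    apply (simp only: S K)
    using sq by (simp add: k algebra_simps power2_eq_square power3_eq_cube)
  have "0 \<le> 4 * cosh m * (sinh m * (cosh m ^ 2 + 1) - 2 * m * cosh m)"
    using key c0 by simp
  with eq show ?thesis by linarith
qed
lemma cosh_sq': "cosh (x::real) * cosh x = sinh x * sinh x + 1"
  using cosh_square_eq[of x] by (simp add: power2_eq_square)



lemma alg_sq: fixes C s \<xi> S :: real assumes "C*C = s* s+1" "\<xi>\<noteq>0" "S\<noteq>0"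
  shows "(\<xi>*(C*C + s* s) - \<xi>)/(2*\<xi>*(S*S)) = s* s/(S*S)"
proof -
  have "\<xi>*(C*C + s* s) - \<xi> = 2*\<xi>*(s* s)" using assms(1) by (simp add: algebra_simps)
  thus ?thesis using assms by simp
qed

lemma deriv_sq: fixes \<xi> S c x :: real assumes "\<xi>\<noteq>0" "S\<noteq>0"
  shows "((\<lambda>x. (sinh(\<xi>*(x-c))* cosh(\<xi>*(x-c)) - \<xi>*x)/(2*\<xi>*(S*S))) has_real_derivative
    sinh(\<xi>*(x-c)) * sinh(\<xi>*(x-c))/(S*S)) (at x)"
proof -
  have "((\<lambda>x. (sinh(\<xi>*(x-c))* cosh(\<xi>*(x-c)) - \<xi>*x)/(2*\<xi>*(S*S))) has_real_derivative
    (\<xi>*(cosh(\<xi>*(x-c))* cosh(\<xi>*(x-c)) + sinh(\<xi>*(x-c))* sinh(\<xi>*(x-c))) - \<xi>)/(2*\<xi>*(S*S))) (at x)"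
    apply (rule derivative_eq_intros refl)+
    using assms by (simp_all add: field_simps)
  thus ?thesis using alg_sq[OF cosh_sq'[of "\<xi>*(x-c)"] assms] by simp
qed


lemma deriv_lin: fixes \<xi> P c x :: real assumes "\<xi>\<noteq>0" "P\<noteq>0"
  shows "((\<lambda>x. cosh(\<xi>*(x-c))/(\<xi>*P)) has_real_derivative sinh(\<xi>*(x-c))/P) (at x)"
  apply (rule derivative_eq_intros refl)+
  using assms by (simp_all add: field_simps)

lemma deriv_prod: fixes \<xi> P a b x :: real assumes "\<xi>\<noteq>0" "P\<noteq>0"
  shows "((\<lambda>x. (sinh(\<xi>*(2*x-a-b)) - 2*\<xi>*x*cosh(\<xi>*(b-a)))/(4*\<xi>*P)) has_real_derivative
     sinh(\<xi>*(x-b)) * sinh(\<xi>*(x-a))/P) (at x)"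
proof -
  have "((\<lambda>x. (sinh(\<xi>*(2*x-a-b)) - 2*\<xi>*x*cosh(\<xi>*(b-a)))/(4*\<xi>*P)) has_real_derivative
     (cosh(\<xi>*(2*x-a-b)) - cosh(\<xi>*(b-a)))/(2*P)) (at x)"
    apply (rule derivative_eq_intros refl)+
    using assms by (simp_all add: field_simps)
  moreover
  have e1: "\<xi>*(2*x-a-b) = \<xi>*(x-b) + \<xi>*(x-a)" by (simp add: algebra_simps)
  have e2: "\<xi>*(b-a) = \<xi>*(x-a) - \<xi>*(x-b)" by (simp add: algebra_simps)
  have "cosh (\<xi>*(2*x-a-b)) - cosh(\<xi>*(b-a)) = 2 * sinh(\<xi>*(x-b)) * sinh(\<xi>*(x-a))"
    unfolding e1 e2 cosh_add cosh_diff by simp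
  ultimately show ?thesis by simp
qed

lemma interval_pos:
  fixes a b \<xi> :: real assumes ab: "a < b" and xi: "0 < \<xi>"
  defines "S \<equiv> sinh (\<xi>*(b-a))" and "K \<equiv> cosh (\<xi>*(b-a))"
  shows "((\<lambda>x. sinh(\<xi>*(x-b))/sinh(\<xi>*(a-b))) has_integral (K-1)/(\<xi>*S)) {a..b}"
    and "((\<lambda>x. sinh(\<xi>*(x-a))/S) has_integral (K-1)/(\<xi>*S)) {a..b}"
    and "((\<lambda>x. (sinh(\<xi>*(x-b))/sinh(\<xi>*(a-b))) * (sinh(\<xi>*(x-b))/sinh(\<xi>*(a-b))))
           has_integral (S*K - \<xi>*(b-a))/(2*\<xi>*S^2)) {a..b}"
    and "((\<lambda>x. (sinh(\<xi>*(x-a))/S) * (sinh(\<xi>*(x-a))/S))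
           has_integral (S*K - \<xi>*(b-a))/(2*\<xi>*S^2)) {a..b}"
    and "((\<lambda>x. (sinh(\<xi>*(x-b))/sinh(\<xi>*(a-b))) * (sinh(\<xi>*(x-a))/S))
           has_integral (\<xi>*(b-a)*K - S)/(2*\<xi>*S^2)) {a..b}"
proof -
  have S0: "S > 0" using ab xi by (simp add: S_def)
  have D: "sinh(\<xi>*(a-b)) = - S" 
    by (metis S_def minus_diff_eq mult_minus_right sinh_minus)
  have Dc: "cosh(\<xi>*(a-b)) = K" 
    by (metis K_def minus_diff_eq mult_minus_right cosh_minus)
  have ab': "a \<le> b" using ab by simp
  have xi0: "\<xi> \<noteq> 0" using xi by simp
  have S00: "S \<noteq> 0" "-S \<noteq> 0" "S*S \<noteq> 0" "-S*S \<noteq> 0" using S0 by auto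
  have z1: "\<xi>*(b-b) = 0" "\<xi>*(a-a) = 0" by simp_all
  show "((\<lambda>x. sinh(\<xi>*(x-b))/sinh(\<xi>*(a-b))) has_integral (K-1)/(\<xi>*S)) {a..b}"
  proof -
    have h: "((\<lambda>x. sinh(\<xi>*(x-b))/(-S)) has_integral
         (cosh(\<xi>*(b-b))/(\<xi>*(-S)) - cosh(\<xi>*(a-b))/(\<xi>*(-S)))) {a..b}"
      by (rule ftc_real[OF ab' deriv_lin[OF xi0 S00(2)]])
    have e1: "cosh(\<xi>*(b-b))/(\<xi>*(-S)) - cosh(\<xi>*(a-b))/(\<xi>*(-S)) = (K-1)/(\<xi>*S)"
    proof -
      have "cosh(\<xi>*(b-b))/(\<xi>*(-S)) - cosh(\<xi>*(a-b))/(\<xi>*(-S)) = 1/(\<xi>*(-S)) - K/(\<xi>*(-S))"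
        by (simp only: z1 Dc cosh_0)
      also have "\<dots> = (K-1)/(\<xi>*S)" using xi0 S00 by (simp add: field_simps)
      finally show ?thesis .
    qed
    have e2: "(\<lambda>x. sinh(\<xi>*(x-b))/(-S)) = (\<lambda>x. sinh(\<xi>*(x-b))/sinh(\<xi>*(a-b)))"
      by (simp only: D)
    from h[unfolded e1 e2] show ?thesis .
  qed
  show "((\<lambda>x. sinh(\<xi>*(x-a))/S) has_integral (K-1)/(\<xi>*S)) {a..b}"
  proof -
    have h: "((\<lambda>x. sinh(\<xi>*(x-a))/S) has_integral
         (cosh(\<xi>*(b-a))/(\<xi>*S) - cosh(\<xi>*(a-a))/(\<xi>*S))) {a..b}"
      by (rule ftc_real[OF ab' deriv_lin[OF xi0 S00(1)]])
    have e1: "cosh(\<xi>*(b-a))/(\<xi>*S) - cosh(\<xi>*(a-a))/(\<xi>*S) = (K-1)/(\<xi>*S)"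
    proof -
      have "cosh(\<xi>*(b-a))/(\<xi>*S) - cosh(\<xi>*(a-a))/(\<xi>*S) = K/(\<xi>*S) - 1/(\<xi>*S)"
        by (simp only: z1 K_def cosh_0)
      also have "\<dots> = (K-1)/(\<xi>*S)" by (simp add: diff_divide_distrib)
      finally show ?thesis .
    qed
    from h[unfolded e1] show ?thesis .
  qed
  have sqv: "(0*1 - \<xi>*b)/(2*\<xi>*(S*S)) - ((-S)*K - \<xi>*a)/(2*\<xi>*(S*S)) = (S*K - \<xi>*(b-a))/(2*\<xi>*S^2)"
    using xi0 S00 by (simp add: field_simps power2_eq_square)
  have sqv2: "(S*K - \<xi>*b)/(2*\<xi>*(S*S)) - (0*1 - \<xi>*a)/(2*\<xi>*(S*S)) = (S*K - \<xi>*(b-a))/(2*\<xi>*S^2)"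
    using xi0 S00 by (simp add: field_simps power2_eq_square)
  show "((\<lambda>x. (sinh(\<xi>*(x-b))/sinh(\<xi>*(a-b))) * (sinh(\<xi>*(x-b))/sinh(\<xi>*(a-b))))
           has_integral (S*K - \<xi>*(b-a))/(2*\<xi>*S^2)) {a..b}"
  proof -
    have h: "((\<lambda>x. sinh(\<xi>*(x-b)) * sinh(\<xi>*(x-b))/(S*S)) has_integral
      ((sinh(\<xi>*(b-b))* cosh(\<xi>*(b-b)) - \<xi>*b)/(2*\<xi>*(S*S)) - (sinh(\<xi>*(a-b))* cosh(\<xi>*(a-b)) - \<xi>*a)/(2*\<xi>*(S*S)))) {a..b}"
      by (rule ftc_real[OF ab' deriv_sq[OF xi0 S00(1)]])
    have e1: "(sinh(\<xi>*(b-b))* cosh(\<xi>*(b-b)) - \<xi>*b)/(2*\<xi>*(S*S)) - (sinh(\<xi>*(a-b))* cosh(\<xi>*(a-b)) - \<xi>*a)/(2*\<xi>*(S*S))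
       = (S*K - \<xi>*(b-a))/(2*\<xi>*S^2)"
      by (simp only: z1 D Dc sinh_0 cosh_0 sqv)
    have e2: "(\<lambda>x. sinh(\<xi>*(x-b)) * sinh(\<xi>*(x-b))/(S*S)) = 
       (\<lambda>x. (sinh(\<xi>*(x-b))/sinh(\<xi>*(a-b))) * (sinh(\<xi>*(x-b))/sinh(\<xi>*(a-b))))"
      by (simp add: D)
    from h[unfolded e1 e2] show ?thesis .
  qed
  show "((\<lambda>x. (sinh(\<xi>*(x-a))/S) * (sinh(\<xi>*(x-a))/S))
           has_integral (S*K - \<xi>*(b-a))/(2*\<xi>*S^2)) {a..b}"
  proof -
    have h: "((\<lambda>x. sinh(\<xi>*(x-a)) * sinh(\<xi>*(x-a))/(S*S)) has_integral
      ((sinh(\<xi>*(b-a))* cosh(\<xi>*(b-a)) - \<xi>*b)/(2*\<xi>*(S*S)) - (sinh(\<xi>*(a-a))* cosh(\<xi>*(a-a)) - \<xi>*a)/(2*\<xi>*(S*S)))) {a..b}"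
      by (rule ftc_real[OF ab' deriv_sq[OF xi0 S00(1)]])
    have e1: "(sinh(\<xi>*(b-a))* cosh(\<xi>*(b-a)) - \<xi>*b)/(2*\<xi>*(S*S)) - (sinh(\<xi>*(a-a))* cosh(\<xi>*(a-a)) - \<xi>*a)/(2*\<xi>*(S*S))
       = (S*K - \<xi>*(b-a))/(2*\<xi>*S^2)"
      by (simp only: z1 S_def[symmetric] K_def[symmetric] sinh_0 cosh_0 sqv2)
    have e2: "(\<lambda>x. sinh(\<xi>*(x-a)) * sinh(\<xi>*(x-a))/(S*S)) = 
       (\<lambda>x. (sinh(\<xi>*(x-a))/S) * (sinh(\<xi>*(x-a))/S))"
      by simp
    from h[unfolded e1 e2] show ?thesis .
  qed
  show "((\<lambda>x. (sinh(\<xi>*(x-b))/sinh(\<xi>*(a-b))) * (sinh(\<xi>*(x-a))/S))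
           has_integral (\<xi>*(b-a)*K - S)/(2*\<xi>*S^2)) {a..b}"
  proof -
    have h: "((\<lambda>x. sinh(\<xi>*(x-b)) * sinh(\<xi>*(x-a))/(-S*S)) has_integral
       ((sinh(\<xi>*(2*b-a-b)) - 2*\<xi>*b*cosh(\<xi>*(b-a)))/(4*\<xi>*(-S*S))
        - (sinh(\<xi>*(2*a-a-b)) - 2*\<xi>*a*cosh(\<xi>*(b-a)))/(4*\<xi>*(-S*S)))) {a..b}"
      by (rule ftc_real[OF ab' deriv_prod[OF xi0 S00(4)]])
    have s1: "sinh(\<xi>*(2*b-a-b)) = S" unfolding S_def by (simp add: algebra_simps)
    have s2: "sinh(\<xi>*(2*a-a-b)) = -S" using D by (simp add: algebra_simps)
    have v: "(S - 2*\<xi>*b*K)/(4*\<xi>*(-S*S)) - ((-S) - 2*\<xi>*a*K)/(4*\<xi>*(-S*S)) = (\<xi>*(b-a)*K - S)/(2*\<xi>*S^2)"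
      using xi0 S00 by (simp add: field_simps power2_eq_square)
    have e1: "(sinh(\<xi>*(2*b-a-b)) - 2*\<xi>*b*cosh(\<xi>*(b-a)))/(4*\<xi>*(-S*S))
        - (sinh(\<xi>*(2*a-a-b)) - 2*\<xi>*a*cosh(\<xi>*(b-a)))/(4*\<xi>*(-S*S)) = (\<xi>*(b-a)*K - S)/(2*\<xi>*S^2)"
      by (simp only: s1 s2 K_def[symmetric] v)
    have e2: "(\<lambda>x. sinh(\<xi>*(x-b)) * sinh(\<xi>*(x-a))/(-S*S)) = 
       (\<lambda>x. (sinh(\<xi>*(x-b))/sinh(\<xi>*(a-b))) * (sinh(\<xi>*(x-a))/S))"
      by (simp add: D)
    from h[unfolded e1 e2] show ?thesis .
  qed
qed



lemma Phi_abs: "Phi \<bar>\<xi>\<bar> x = Phi \<xi> x"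
proof (cases "\<xi> < 0")
  case True
  have "sinh (- \<xi> * x) / - \<xi> = sinh (\<xi> * x) / \<xi>"
    by simp
  thus ?thesis using True by (simp add: Phi_def)
qed (simp add: Phi_def)

lemma Phi_pos: "0 < \<xi> \<Longrightarrow> Phi \<xi> x = sinh (\<xi> * x) / \<xi>"
  by (simp add: Phi_def)

lemma Phi_zero[simp]: "Phi \<xi> 0 = 0"
  by (simp add: Phi_def)

lemma Phi_minus: "Phi \<xi> (- x) = - Phi \<xi> x"
  by (simp add: Phi_def)

lemma Phi_pos_iff: "0 < Phi \<xi> x \<longleftrightarrow> 0 < x"
proof -
  have "Phi \<xi> x = Phi \<bar>\<xi>\<bar> x" by (simp add: Phi_abs)
  moreover have "0 < Phi \<bar>\<xi>\<bar> x \<longleftrightarrow> 0 < x"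
    by (cases "\<xi> = 0") (auto simp: Phi_def divide_pos_pos zero_less_divide_iff zero_less_mult_iff)
  ultimately show ?thesis by simp
qed

lemma Phi_nonzero: "x \<noteq> 0 \<Longrightarrow> Phi \<xi> x \<noteq> 0"
proof (cases "x > 0")
  case True thus ?thesis using Phi_pos_iff[of \<xi> x] by simp
next
  case False
  assume "x \<noteq> 0"
  hence "0 < -x" using False by simp
  hence "0 < Phi \<xi> (-x)" by (simp only: Phi_pos_iff)
  thus ?thesis unfolding Phi_minus by simp
qed

lemma Phi_cont: "continuous_on UNIV (Phi \<xi>)"
  unfolding Phi_def by (cases "\<xi> = 0") (auto intro!: continuous_intros)

lemma Phi_superadd:
  assumes "0 \<le> p" "0 \<le> q" shows "Phi \<xi> p + Phi \<xi> q \<le> Phi \<xi> (p + q)"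
proof -
  have "Phi \<bar>\<xi>\<bar> p + Phi \<bar>\<xi>\<bar> q \<le> Phi \<bar>\<xi>\<bar> (p + q)"
  proof (cases "\<xi> = 0")
    case True thus ?thesis by (simp add: Phi_def)
  next
    case False
    let ?z = "\<bar>\<xi>\<bar>"
    have z: "0 < ?z" using False by simp
    have sp: "0 \<le> sinh (?z*p)" "0 \<le> sinh (?z*q)" using assms z by simp_all
    have "sinh (?z*p) + sinh (?z*q) \<le> sinh (?z*p) * cosh (?z*q) + cosh (?z*p) * sinh (?z*q)"
    proof -
      have "sinh (?z*p) * 1 \<le> sinh (?z*p) * cosh (?z*q)"
        by (rule mult_left_mono[OF cosh_real_ge_1 sp(1)])
      moreover have "1 * sinh (?z*q) \<le> cosh (?z*p) * sinh (?z*q)"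
        by (rule mult_right_mono[OF cosh_real_ge_1 sp(2)])
      ultimately show ?thesis by simp
    qed
    also have "\<dots> = sinh (?z*(p+q))" by (simp add: sinh_add distrib_left)
    finally show ?thesis using z by (simp add: Phi_pos divide_right_mono add_divide_distrib[symmetric])
  qed
  thus ?thesis by (simp add: Phi_abs)
qed

lemma interval_pointwise:
  fixes a b \<xi> x :: real assumes "a < b" "a \<le> x" "x \<le> b"
  shows "0 \<le> Phi \<xi> (x-b)/Phi \<xi> (a-b)" "0 \<le> Phi \<xi> (x-a)/Phi \<xi> (b-a)"
    "Phi \<xi> (x-b)/Phi \<xi> (a-b) + Phi \<xi> (x-a)/Phi \<xi> (b-a) \<le> 1"
proof -
  have hb: "0 < Phi \<xi> (b-a)" using assms by (simp add: Phi_pos_iff)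
  have e1: "Phi \<xi> (a-b) = - Phi \<xi> (b-a)" using Phi_minus[of \<xi> "b-a"] by simp
  have e2: "Phi \<xi> (x-b) = - Phi \<xi> (b-x)" using Phi_minus[of \<xi> "b-x"] by simp
  have nb: "0 \<le> Phi \<xi> (b-x)" using assms by (cases "x = b") (auto simp: Phi_pos_iff less_imp_le)
  have na: "0 \<le> Phi \<xi> (x-a)" using assms by (cases "x = a") (auto simp: Phi_pos_iff less_imp_le)
  have eqL: "Phi \<xi> (x-b)/Phi \<xi> (a-b) = Phi \<xi> (b-x)/Phi \<xi> (b-a)" using e1 e2 by simp
  show "0 \<le> Phi \<xi> (x-b)/Phi \<xi> (a-b)" using eqL nb hb by simp
  show "0 \<le> Phi \<xi> (x-a)/Phi \<xi> (b-a)" using na hb by simp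
  have "Phi \<xi> (b-x) + Phi \<xi> (x-a) \<le> Phi \<xi> (b-a)"
    using Phi_superadd[of "b-x" "x-a" \<xi>] assms by simp
  thus "Phi \<xi> (x-b)/Phi \<xi> (a-b) + Phi \<xi> (x-a)/Phi \<xi> (b-a) \<le> 1"
    using eqL hb by (simp add: add_divide_distrib[symmetric])
qed




lemma int_quad:
  fixes a b p q :: real assumes "a \<le> b"
  shows "((\<lambda>x. (x-p)*(x-q)) has_integral
     ((b^3/3 - (p+q)*b^2/2 + p*q*b) - (a^3/3 - (p+q)*a^2/2 + p*q*a))) {a..b}"
  apply (rule ftc_real[OF assms, of "\<lambda>x. x^3/3 - (p+q)*x^2/2 + p*q*x"])
  by (auto intro!: derivative_eq_intros simp: algebra_simps power2_eq_square)

lemma int_lin1: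
  fixes a b p :: real assumes "a \<le> b"
  shows "((\<lambda>x. x-p) has_integral ((b^2/2 - p*b) - (a^2/2 - p*a))) {a..b}"
  apply (rule ftc_real[OF assms, of "\<lambda>x. x^2/2 - p*x"])
  by (auto intro!: derivative_eq_intros simp: algebra_simps power2_eq_square)

lemma scale_int:
  fixes f g :: "real \<Rightarrow> real" and S :: "real set"
  assumes "(f has_integral y) S" "\<And>x. g x = f x * c" "z = y * c"
  shows "(g has_integral z) S"
proof -
  have "g = (\<lambda>x. f x * c)" using assms(2) by auto
  thus ?thesis using has_integral_mult_left[OF assms(1), of c] assms(3) by simp
qed

lemma interval_lin:
  fixes a b :: real assumes ab: "a < b"
  shows "((\<lambda>x. (x-b)/(a-b)) has_integral (b-a)/2) {a..b}"
    and "((\<lambda>x. (x-a)/(b-a)) has_integral (b-a)/2) {a..b}"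
    and "((\<lambda>x. (x-b)/(a-b) * ((x-b)/(a-b))) has_integral (b-a)/3) {a..b}"
    and "((\<lambda>x. (x-a)/(b-a) * ((x-a)/(b-a))) has_integral (b-a)/3) {a..b}"
    and "((\<lambda>x. (x-b)/(a-b) * ((x-a)/(b-a))) has_integral (b-a)/6) {a..b}"
proof -
  have ab': "a \<le> b" "a - b \<noteq> 0" "b - a \<noteq> 0" using ab by auto
  have h: "b - a \<noteq> 0" using ab by simp
  show "((\<lambda>x. (x-b)/(a-b)) has_integral (b-a)/2) {a..b}"
  proof (rule scale_int[OF int_lin1[OF ab'(1), of b], of _ "1/(a-b)"])
    show "(b-a)/2 = ((b^2/2 - b*b) - (a^2/2 - b*a)) * (1/(a-b))"
    proof -
      have "(b^2/2 - b*b) - (a^2/2 - b*a) = (b-a)^2/2 * (-1)" by (simp add: algebra_simps power2_eq_square)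
      thus ?thesis using ab' by (simp add: power2_eq_square divide_simps) (simp add: algebra_simps)
    qed
  qed simp
  show "((\<lambda>x. (x-a)/(b-a)) has_integral (b-a)/2) {a..b}"
  proof (rule scale_int[OF int_lin1[OF ab'(1), of a], of _ "1/(b-a)"])
    show "(b-a)/2 = ((b^2/2 - a*b) - (a^2/2 - a*a)) * (1/(b-a))"
    proof -
      have "(b^2/2 - a*b) - (a^2/2 - a*a) = (b-a)^2/2" by (simp add: algebra_simps power2_eq_square)
      thus ?thesis using ab' by (simp add: power2_eq_square)
    qed
  qed simp
  show "((\<lambda>x. (x-b)/(a-b) * ((x-b)/(a-b))) has_integral (b-a)/3) {a..b}"
  proof (rule scale_int[OF int_quad[OF ab'(1), of b b], of _ "1/((b-a)*(b-a))"])
    show "(b-a)/3 = ((b^3/3 - (b+b)*b^2/2 + b*b*b) - (a^3/3 - (b+b)*a^2/2 + b*b*a)) * (1/((b-a)*(b-a)))"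
    proof -
      have "(b^3/3 - (b+b)*b^2/2 + b*b*b) - (a^3/3 - (b+b)*a^2/2 + b*b*a) = (b-a)*((b-a)*(b-a))/3"
        by (simp add: algebra_simps power2_eq_square power3_eq_cube)
      thus ?thesis using h by simp
    qed
    fix x show "(x-b)/(a-b) * ((x-b)/(a-b)) = (x-b)*(x-b) * (1/((b-a)*(b-a)))"
      using ab' by (simp add: divide_simps) (simp add: algebra_simps)
  qed
  show "((\<lambda>x. (x-a)/(b-a) * ((x-a)/(b-a))) has_integral (b-a)/3) {a..b}"
  proof (rule scale_int[OF int_quad[OF ab'(1), of a a], of _ "1/((b-a)*(b-a))"])
    show "(b-a)/3 = ((b^3/3 - (a+a)*b^2/2 + a*a*b) - (a^3/3 - (a+a)*a^2/2 + a*a*a)) * (1/((b-a)*(b-a)))"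
    proof -
      have "(b^3/3 - (a+a)*b^2/2 + a*a*b) - (a^3/3 - (a+a)*a^2/2 + a*a*a) = (b-a)*((b-a)*(b-a))/3"
        by (simp add: algebra_simps power2_eq_square power3_eq_cube)
      thus ?thesis using h by simp
    qed
    fix x show "(x-a)/(b-a) * ((x-a)/(b-a)) = (x-a)*(x-a) * (1/((b-a)*(b-a)))"
      using ab' by simp
  qed
  show "((\<lambda>x. (x-b)/(a-b) * ((x-a)/(b-a))) has_integral (b-a)/6) {a..b}"
  proof (rule scale_int[OF int_quad[OF ab'(1), of b a], of _ "-1/((b-a)*(b-a))"])
    show "(b-a)/6 = ((b^3/3 - (b+a)*b^2/2 + b*a*b) - (a^3/3 - (b+a)*a^2/2 + b*a*a)) * (-1/((b-a)*(b-a)))"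
    proof -
      have "6 * ((b^3/3 - (b+a)*b^2/2 + b*a*b) - (a^3/3 - (b+a)*a^2/2 + b*a*a)) = -((b-a)*((b-a)*(b-a)))"
        by (simp add: field_simps power2_eq_square power3_eq_cube)
      hence "(b^3/3 - (b+a)*b^2/2 + b*a*b) - (a^3/3 - (b+a)*a^2/2 + b*a*a) = -((b-a)*((b-a)*(b-a))/6)"
        by (simp add: field_simps)
      thus ?thesis using h by simp
    qed
    fix x show "(x-b)/(a-b) * ((x-a)/(b-a)) = (x-b)*(x-a) * (-1/((b-a)*(b-a)))"
      using ab' by (simp add: divide_simps) (simp add: algebra_simps)
  qed
qed


lemma interval_facts:
  fixes a b \<xi> :: real assumes ab: "a < b"
  shows "\<exists>IL IR AL AR CC. ((\<lambda>x. Phi \<xi> (x-b)/Phi \<xi> (a-b)) has_integral IL) {a..b}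
      \<and> ((\<lambda>x. Phi \<xi> (x-a)/Phi \<xi> (b-a)) has_integral IR) {a..b}
      \<and> ((\<lambda>x. Phi \<xi> (x-b)/Phi \<xi> (a-b) * (Phi \<xi> (x-b)/Phi \<xi> (a-b))) has_integral AL) {a..b}
      \<and> ((\<lambda>x. Phi \<xi> (x-a)/Phi \<xi> (b-a) * (Phi \<xi> (x-a)/Phi \<xi> (b-a))) has_integral AR) {a..b}
      \<and> ((\<lambda>x. Phi \<xi> (x-b)/Phi \<xi> (a-b) * (Phi \<xi> (x-a)/Phi \<xi> (b-a))) has_integral CC) {a..b}
      \<and> 0 < IL \<and> 0 < IR \<and> IL \<le> 4*(AL - CC) \<and> IR \<le> 4*(AR - CC)"
proof -
  define z where "z = \<bar>\<xi>\<bar>"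
  have Pz: "Phi \<xi> y = Phi z y" for y unfolding z_def by (simp add: Phi_abs)
  show ?thesis
  proof (cases "z = 0")
    case True
    have P0: "Phi \<xi> y = y" for y using True Pz by (simp add: Phi_def)
    show ?thesis unfolding P0
      apply (rule exI[of _ "(b-a)/2"], rule exI[of _ "(b-a)/2"], rule exI[of _ "(b-a)/3"],
             rule exI[of _ "(b-a)/3"], rule exI[of _ "(b-a)/6"])
      using interval_lin[OF ab] ab by simp
  next
    case False
    hence z: "0 < z" unfolding z_def by simp
    define S where "S = sinh (z*(b-a))"
    define K where "K = cosh (z*(b-a))"
    define k where "k = z*(b-a)"
    have k0: "0 < k" using z ab by (simp add: k_def)
    have S0: "0 < S" using z ab by (simp add: S_def)
    have K1: "1 < K" using cosh_real_ge_1[of k] cosh_real_one_iff[of k] k0 unfolding K_def k_def by linarith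
    have Pf: "Phi \<xi> y = sinh (z*y)/z" for y using Pz Phi_pos[OF z] by simp
    have eL: "Phi \<xi> (x-b)/Phi \<xi> (a-b) = sinh(z*(x-b))/sinh(z*(a-b))" for x using z by (simp add: Pf)
    have eR: "Phi \<xi> (x-a)/Phi \<xi> (b-a) = sinh(z*(x-a))/S" for x using z by (simp add: Pf S_def)
    note I = interval_pos[OF ab z, folded S_def K_def]
    have ineq: "(K-1)/(z*S) \<le> 4*((S*K - z*(b-a))/(2*z*S^2) - (z*(b-a)*K - S)/(2*z*S^2))"
    proof -
      have c: "(K - 1) * S \<le> 2 * (S - k) * (K + 1)"
        using core_ineq[OF k0] unfolding K_def S_def k_def by simp
      have e1: "4*((S*K - z*(b-a))/(2*z*S^2) - (z*(b-a)*K - S)/(2*z*S^2)) = (2 * (S - k) * (K + 1))/(z*S^2)"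
        using z S0 unfolding k_def by (simp add: field_simps)
      have e2: "(K-1)/(z*S) = ((K - 1) * S)/(z*S^2)"
        using z S0 by (simp add: field_simps power2_eq_square)
      show ?thesis unfolding e1 e2 using c z S0 by (simp add: divide_right_mono)
    qed
    have pos: "0 < (K-1)/(z*S)" using K1 z S0 by simp
    show ?thesis unfolding eL eR
      apply (rule exI[of _ "(K-1)/(z*S)"], rule exI[of _ "(K-1)/(z*S)"],
             rule exI[of _ "(S*K - z*(b-a))/(2*z*S^2)"],
             rule exI[of _ "(S*K - z*(b-a))/(2*z*S^2)"], rule exI[of _ "(z*(b-a)*K - S)/(2*z*S^2)"])
      using I ineq pos by simp
  qed
qed



lemma sum_delta_cond:
  assumes "finite A" "\<And>k. k \<in> A \<Longrightarrow> P k \<longleftrightarrow> (k = c \<and> Q)"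
  shows "(\<Sum>k\<in>A. if P k then f k else (0::real)) = (if c \<in> A \<and> Q then f c else 0)"
proof -
  have "(\<Sum>k\<in>A. if P k then f k else 0) = (\<Sum>k\<in>A. if k = c then (if Q then f k else 0) else 0)"
    by (rule sum.cong) (auto simp: assms(2))
  also have "\<dots> = (if c \<in> A \<and> Q then f c else 0)" using assms(1) by (simp add: sum.delta)
  finally show ?thesis .
qed

locale hs =
  fixes n :: nat and tt \<xi> :: "nat \<Rightarrow> real"
  assumes n3: "n \<ge> 3" and incr: "\<And>i. 1 \<le> i \<Longrightarrow> i < n \<Longrightarrow> tt i < tt (i + 1)"
begin

lemma mono: "1 \<le> p \<Longrightarrow> p < q \<Longrightarrow> q \<le> n \<Longrightarrow> tt p < tt q"
proof (induction q)
  case 0 thus ?case by simp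
next
  case (Suc q)
  show ?case
  proof (cases "p = q")
    case True thus ?thesis using incr[of q] Suc.prems by simp
  next
    case False
    hence "tt p < tt q" using Suc by simp
    moreover have "tt q < tt (q+1)" using incr[of q] Suc.prems False by simp
    ultimately show ?thesis by simp
  qed
qed

lemma mono_le: "1 \<le> p \<Longrightarrow> p \<le> q \<Longrightarrow> q \<le> n \<Longrightarrow> tt p \<le> tt q"
  using mono[of p q] by (cases "p = q") auto

definition LL :: "nat \<Rightarrow> real \<Rightarrow> real" where
  "LL k x = Phi (\<xi> k) (x - tt (k+1)) / Phi (\<xi> k) (tt k - tt (k+1))"
definition RR :: "nat \<Rightarrow> real \<Rightarrow> real" where
  "RR k x = Phi (\<xi> k) (x - tt k) / Phi (\<xi> k) (tt (k+1) - tt k)"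
definition ee :: "nat \<Rightarrow> nat \<Rightarrow> real \<Rightarrow> real" where
  "ee j k x = (if j = k then LL k x else if j = k+1 then RR k x else 0)"

lemma Phi_shift_cont: "continuous_on S (\<lambda>x. Phi z (x - c) * d)"
proof -
  have "continuous_on S (\<lambda>x. Phi z (x - c))"
    by (rule continuous_on_compose2[OF Phi_cont]) (auto intro!: continuous_intros)
  thus ?thesis by (intro continuous_intros)
qed

lemma LL_cont: "continuous_on S (LL k)"
  unfolding LL_def divide_inverse by (rule Phi_shift_cont)

lemma RR_cont: "continuous_on S (RR k)"
  unfolding RR_def divide_inverse by (rule Phi_shift_cont)

lemma ee_cont: "continuous_on S (ee j k)"
proof -
  have "ee j k = (if j = k then LL k else if j = k+1 then RR k else (\<lambda>_. 0))"
    by (auto simp: ee_def fun_eq_iff)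
  thus ?thesis by (simp add: LL_cont RR_cont)
qed

lemma hat_on:
  assumes k: "1 \<le> k" "k < n" and x: "tt k \<le> x" "x \<le> tt (k+1)" and j: "1 \<le> j" "j \<le> n"
  shows "hat n tt \<xi> j x = ee j k x"
proof -
  have tk: "tt k < tt (k+1)" using incr k by simp
  consider "j = k" | "j = k + 1" | "j < k" | "j > k + 1" by linarith
  thus ?thesis
  proof cases
    case 1
    show ?thesis
    proof (cases "2 \<le> k \<and> tt (k-1) \<le> x \<and> x \<le> tt k")
      case True
      hence xk: "x = tt k" using x by simp
      have "1 \<le> k - 1" using True by arith
      hence "tt (k-1) < tt k" using mono[of "k-1" k] True k by simp
      hence "Phi (\<xi> (k-1)) (tt k - tt (k-1)) \<noteq> 0" by (simp add: Phi_nonzero)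
      moreover have "Phi (\<xi> k) (tt k - tt (k+1)) \<noteq> 0" using tk by (simp add: Phi_nonzero)
      ultimately show ?thesis using True 1 xk by (simp add: hat_def ee_def LL_def)
    next
      case False
      thus ?thesis using 1 k x by (simp add: hat_def ee_def LL_def)
    qed
  next
    case 2
    thus ?thesis using k x by (simp add: hat_def ee_def RR_def)
  next
    case 3
    have c1: "\<not> (tt (j-1) \<le> x \<and> x \<le> tt j) \<or> j < 2"
    proof -
      have "tt j < tt k" using mono[of j k] 3 j k by simp
      thus ?thesis using x by auto
    qed
    show ?thesis
    proof (cases "j + 1 = k")
      case True
      hence "hat n tt \<xi> j x = (if j \<le> n - 1 \<and> tt j \<le> x \<and> x \<le> tt (j + 1) then
          Phi (\<xi> j) (x - tt (j + 1)) / Phi (\<xi> j) (tt j - tt (j + 1)) else 0)"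
        using c1 by (auto simp: hat_def)
      also have "\<dots> = 0" using True x by auto
      finally show ?thesis using 3 by (simp add: ee_def)
    next
      case False
      hence "tt (j+1) < tt k" using mono[of "j+1" k] 3 j k by simp
      thus ?thesis using c1 3 x by (auto simp: hat_def ee_def)
    qed
  next
    case 4
    have c2: "\<not> (tt j \<le> x)"
    proof -
      have "tt (k+1) < tt j" using mono[of "k+1" j] 4 j k by simp
      thus ?thesis using x by auto
    qed
    show ?thesis
    proof (cases "j = k + 2")
      case True
      hence "hat n tt \<xi> j x = (if tt (k+1) \<le> x \<and> x \<le> tt j then
          Phi (\<xi> (k+1)) (x - tt (k+1)) / Phi (\<xi> (k+1)) (tt j - tt (k+1)) else 0)"
        using c2 by (auto simp: hat_def)
      also have "\<dots> = 0" using True x by auto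
      finally show ?thesis using 4 by (simp add: ee_def)
    next
      case False
      hence "tt (k+1) < tt (j-1)" using mono[of "k+1" "j-1"] 4 j k by simp
      thus ?thesis using c2 4 x by (auto simp: hat_def ee_def)
    qed
  qed
qed

lemma cover:
  assumes "tt 1 \<le> x" "x \<le> tt n"
  shows "\<exists>k. 1 \<le> k \<and> k < n \<and> tt k \<le> x \<and> x \<le> tt (k+1)"
proof -
  have "\<And>m. 2 \<le> m \<Longrightarrow> m \<le> n \<Longrightarrow> x \<le> tt m \<Longrightarrow> \<exists>k. 1 \<le> k \<and> k < m \<and> tt k \<le> x \<and> x \<le> tt (k+1)"
  proof -
    fix m show "2 \<le> m \<Longrightarrow> m \<le> n \<Longrightarrow> x \<le> tt m \<Longrightarrow> \<exists>k. 1 \<le> k \<and> k < m \<and> tt k \<le> x \<and> x \<le> tt (k+1)"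
    proof (induction m)
      case 0 thus ?case by simp
    next
      case (Suc m)
      show ?case
      proof (cases "m < 2")
        case True
        hence "m = 1" using Suc by simp
        thus ?thesis using Suc assms by auto
      next
        case False
        show ?thesis
        proof (cases "x \<le> tt m")
          case True
          then obtain k where "1 \<le> k \<and> k < m \<and> tt k \<le> x \<and> x \<le> tt (k+1)" using Suc False by auto
          thus ?thesis by (intro exI[of _ k]) auto
        next
          case False2: False
          thus ?thesis using Suc False by (intro exI[of _ m]) auto
        qed
      qed
    qed
  qed
  from this[of n] n3 assms show ?thesis by simp
qed

lemma split_has_int:
  fixes f :: "real \<Rightarrow> real"
  assumes "\<And>k. 1 \<le> k \<Longrightarrow> k < m \<Longrightarrow> f integrable_on {tt k..tt (k+1)}" "1 \<le> m" "m \<le> n"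
  shows "(f has_integral (\<Sum>k\<in>{1..<m}. integral {tt k..tt (k+1)} f)) {tt 1..tt m}"
  using assms
proof (induction m)
  case 0 thus ?case by simp
next
  case (Suc m)
  show ?case
  proof (cases "m = 0")
    case True thus ?thesis by auto
  next
    case False
    have IH: "(f has_integral (\<Sum>k\<in>{1..<m}. integral {tt k..tt (k+1)} f)) {tt 1..tt m}"
      using Suc False by simp
    have p: "(f has_integral integral {tt m..tt (m+1)} f) {tt m..tt (Suc m)}"
      using Suc.prems False by auto
    have "(f has_integral (\<Sum>k\<in>{1..<m}. integral {tt k..tt (k+1)} f) + integral {tt m..tt (m+1)} f) {tt 1..tt (Suc m)}"
      apply (rule has_integral_combine[OF _ _ IH p])
      using mono_le[of 1 m] incr[of m] Suc.prems False by auto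
    moreover have "{1..<Suc m} = insert m {1..<m}" using False by auto
    ultimately show ?thesis by (simp add: add.commute)
  qed
qed

lemma pieces_has_int:
  fixes G :: "real \<Rightarrow> real" and F :: "nat \<Rightarrow> real \<Rightarrow> real"
  assumes "\<And>k. 1 \<le> k \<Longrightarrow> k < n \<Longrightarrow> continuous_on {tt k..tt (k+1)} (F k)"
    and "\<And>k x. 1 \<le> k \<Longrightarrow> k < n \<Longrightarrow> tt k \<le> x \<Longrightarrow> x \<le> tt (k+1) \<Longrightarrow> G x = F k x"
  shows "(G has_integral (\<Sum>k\<in>{1..<n}. integral {tt k..tt (k+1)} (F k))) {tt 1..tt n}"
proof -
  have i: "G integrable_on {tt k..tt (k+1)} \<and> integral {tt k..tt (k+1)} G = integral {tt k..tt (k+1)} (F k)"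
    if "1 \<le> k" "k < n" for k
  proof -
    have "F k integrable_on {tt k..tt (k+1)}" using assms(1) that integrable_continuous_interval by blast
    moreover have "\<forall>x\<in>{tt k..tt (k+1)}. F k x = G x" using assms(2) that by auto
    ultimately show ?thesis using integrable_eq integral_cong by metis
  qed
  have "(G has_integral (\<Sum>k\<in>{1..<n}. integral {tt k..tt (k+1)} G)) {tt 1..tt n}"
    by (rule split_has_int) (use i n3 in auto)
  moreover have "(\<Sum>k\<in>{1..<n}. integral {tt k..tt (k+1)} G) = (\<Sum>k\<in>{1..<n}. integral {tt k..tt (k+1)} (F k))"
    using i by (intro sum.cong) auto
  ultimately show ?thesis by simp
qed

end



lemma sum_delta_cond_mult:
  assumes "finite A" "\<And>k. k \<in> A \<Longrightarrow> P k \<longleftrightarrow> (k = c \<and> Q)"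
  shows "(\<Sum>k\<in>A. a k * (if P k then f k else (0::real))) = (if c \<in> A \<and> Q then a c * f c else 0)"
proof -
  have "(\<Sum>k\<in>A. a k * (if P k then f k else (0::real))) = (\<Sum>k\<in>A. if P k then a k * f k else 0)"
    by (rule sum.cong) auto
  also have "\<dots> = (if c \<in> A \<and> Q then a c * f c else 0)" by (rule sum_delta_cond[OF assms])
  finally show ?thesis .
qed

lemma mixed_bound:
  fixes x y A C :: real
  assumes "\<bar>x\<bar> \<le> A" "\<bar>y\<bar> \<le> A" "0 \<le> C"
  shows "- (A*A*C) \<le> y*x*C"
proof -
  have "\<bar>y*x\<bar> \<le> A*A" unfolding abs_mult using assms by (simp add: mult_mono')
  hence "- (A*A) \<le> y*x" by linarith
  thus ?thesis using assms(3) by (metis mult_minus_left mult_right_mono)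
qed

context hs
begin

definition "Lint k = integral {tt k..tt (k+1)} (LL k)"
definition "Rint k = integral {tt k..tt (k+1)} (RR k)"
definition "LLi k = integral {tt k..tt (k+1)} (\<lambda>x. LL k x * LL k x)"
definition "RRi k = integral {tt k..tt (k+1)} (\<lambda>x. RR k x * RR k x)"
definition "LRi k = integral {tt k..tt (k+1)} (\<lambda>x. LL k x * RR k x)"

lemma pointwise:
  assumes "1 \<le> k" "k < n" "tt k \<le> x" "x \<le> tt (k+1)"
  shows "0 \<le> LL k x" "0 \<le> RR k x" "LL k x + RR k x \<le> 1"
  using interval_pointwise[of "tt k" "tt (k+1)" x "\<xi> k"] incr[of k] assms
  by (simp_all add: LL_def RR_def)

lemma ee_nonneg: "1 \<le> k \<Longrightarrow> k < n \<Longrightarrow> tt k \<le> x \<Longrightarrow> x \<le> tt (k+1) \<Longrightarrow> 0 \<le> ee j k x"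
  using pointwise by (simp add: ee_def)

lemma piece_facts:
  assumes "1 \<le> k" "k < n"
  shows "0 < Lint k" "0 < Rint k" "Lint k \<le> 4*(LLi k - LRi k)" "Rint k \<le> 4*(RRi k - LRi k)" "0 \<le> LRi k"
proof -
  have ab: "tt k < tt (k+1)" using incr assms by simp
  obtain il ir al ar cc where H:
    "(LL k has_integral il) {tt k..tt (k+1)}" "(RR k has_integral ir) {tt k..tt (k+1)}"
    "((\<lambda>x. LL k x * LL k x) has_integral al) {tt k..tt (k+1)}"
    "((\<lambda>x. RR k x * RR k x) has_integral ar) {tt k..tt (k+1)}"
    "((\<lambda>x. LL k x * RR k x) has_integral cc) {tt k..tt (k+1)}"
    "0 < il" "0 < ir" "il \<le> 4*(al - cc)" "ir \<le> 4*(ar - cc)"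
    using interval_facts[OF ab, of "\<xi> k"] unfolding LL_def[abs_def] RR_def[abs_def] by blast
  have e: "Lint k = il" "Rint k = ir" "LLi k = al" "RRi k = ar" "LRi k = cc"
    using H by (simp_all add: Lint_def Rint_def LLi_def RRi_def LRi_def integral_unique)
  show "0 < Lint k" "0 < Rint k" "Lint k \<le> 4*(LLi k - LRi k)" "Rint k \<le> 4*(RRi k - LRi k)"
    using H e by simp_all
  show "0 \<le> LRi k"
    using has_integral_nonneg[OF H(5)] pointwise[OF assms] e by (simp add: mult_nonneg_nonneg)
qed

lemma int_ee:
  "integral {tt k..tt (k+1)} (\<lambda>x. ee i k x * ee j k x) =
     (if i = k \<and> j = k then LLi k else 0) + (if i = k \<and> j = k+1 then LRi k else 0)
     + (if i = k+1 \<and> j = k then LRi k else 0) + (if i = k+1 \<and> j = k+1 then RRi k else 0)"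
proof -
  consider "i = k" | "i = k+1" | "i \<noteq> k \<and> i \<noteq> k+1" by blast
  thus ?thesis
  proof cases
    case 1 thus ?thesis
      by (cases "j = k"; cases "j = k+1") (auto simp: ee_def LLi_def LRi_def)
  next
    case 2 thus ?thesis
      by (cases "j = k"; cases "j = k+1") (auto simp: ee_def RRi_def LRi_def mult.commute)
  qed (auto simp: ee_def)
qed

lemma ee_fun: "ee j k = (if j = k then LL k else if j = k+1 then RR k else (\<lambda>_. 0))"
  by (auto simp: ee_def fun_eq_iff)

lemma int_ee1:
  "integral {tt k..tt (k+1)} (ee j k) = (if j = k then Lint k else 0) + (if j = k+1 then Rint k else 0)"
  by (auto simp: ee_fun Lint_def Rint_def)

definition "Gm i j = (if i \<in> {1..<n} \<and> j = i then LLi i else 0) + (if i \<in> {1..<n} \<and> j = i+1 then LRi i else 0)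
   + (if j \<in> {1..<n} \<and> i = j+1 then LRi j else 0) + (if j - 1 \<in> {1..<n} \<and> i = j \<and> 1 \<le> j then RRi (j-1) else 0)"

lemma gram_sum:
  assumes "1 \<le> i" "i \<le> n" "1 \<le> j" "j \<le> n"
  shows "gram n tt \<xi> i j = (\<Sum>k\<in>{1..<n}. integral {tt k..tt (k+1)} (\<lambda>x. ee i k x * ee j k x))"
proof -
  have "((\<lambda>x. hat n tt \<xi> i x * hat n tt \<xi> j x) has_integral
     (\<Sum>k\<in>{1..<n}. integral {tt k..tt (k+1)} (\<lambda>x. ee i k x * ee j k x))) {tt 1..tt n}"
  proof (rule pieces_has_int)
    fix k x assume "1 \<le> k" "k < n" "tt k \<le> x" "x \<le> tt (k+1)"
    thus "hat n tt \<xi> i x * hat n tt \<xi> j x = ee i k x * ee j k x"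
      using hat_on[of k x i] hat_on[of k x j] assms by simp
  qed (auto intro!: continuous_on_mult ee_cont)
  thus ?thesis unfolding gram_def by (rule integral_unique)
qed

lemma gram_eq:
  assumes "1 \<le> i" "i \<le> n" "1 \<le> j" "j \<le> n"
  shows "gram n tt \<xi> i j = Gm i j"
proof -
  have "gram n tt \<xi> i j = (\<Sum>k\<in>{1..<n}. (if i = k \<and> j = k then LLi k else 0)) + (\<Sum>k\<in>{1..<n}. (if i = k \<and> j = k+1 then LRi k else 0))
     + (\<Sum>k\<in>{1..<n}. (if i = k+1 \<and> j = k then LRi k else 0)) + (\<Sum>k\<in>{1..<n}. (if i = k+1 \<and> j = k+1 then RRi k else 0))"
    unfolding gram_sum[OF assms] int_ee by (simp add: sum.distrib)
  also have "\<dots> = Gm i j"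
    unfolding Gm_def
    apply (subst sum_delta_cond[where c = i and Q = "j = i"], simp, fastforce)
    apply (subst sum_delta_cond[where c = i and Q = "j = i+1"], simp, fastforce)
    apply (subst sum_delta_cond[where c = j and Q = "i = j+1"], simp, fastforce)
    apply (subst sum_delta_cond[where c = "j-1" and Q = "i = j \<and> 1 \<le> j"], simp, fastforce)
    by simp
  finally show ?thesis .
qed

lemma gram_diag: "1 \<le> j \<Longrightarrow> j \<le> n \<Longrightarrow> gram n tt \<xi> j j = (if j < n then LLi j else 0) + (if 2 \<le> j then RRi (j-1) else 0)"
  by (auto simp: gram_eq Gm_def)

lemma gram_up: "1 \<le> j \<Longrightarrow> j < n \<Longrightarrow> gram n tt \<xi> j (j+1) = LRi j"
  by (auto simp: gram_eq Gm_def)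

lemma gram_down: "2 \<le> j \<Longrightarrow> j \<le> n \<Longrightarrow> gram n tt \<xi> (j-1) j = LRi (j-1)"
  by (auto simp: gram_eq Gm_def)

definition "rowS a j = (\<Sum>l\<in>{1..n}. a l * gram n tt \<xi> l j)"
definition "rowC a j = (if j < n then a j * LLi j + a (j+1) * LRi j else 0) + (if 2 \<le> j then a (j-1) * LRi (j-1) + a j * RRi (j-1) else 0)"

lemma row_eq:
  assumes "1 \<le> j" "j \<le> n"
  shows "rowS a j = rowC a j"
proof -
  have "rowS a j = (\<Sum>l\<in>{1..n}. a l * Gm l j)"
    unfolding rowS_def using assms by (intro sum.cong) (auto simp: gram_eq)
  also have "\<dots> = (\<Sum>l\<in>{1..n}. a l * (if l \<in> {1..<n} \<and> j = l then LLi l else 0))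
     + (\<Sum>l\<in>{1..n}. a l * (if l \<in> {1..<n} \<and> j = l+1 then LRi l else 0))
     + (\<Sum>l\<in>{1..n}. a l * (if j \<in> {1..<n} \<and> l = j+1 then LRi j else 0))
     + (\<Sum>l\<in>{1..n}. a l * (if j - 1 \<in> {1..<n} \<and> l = j \<and> 1 \<le> j then RRi (j-1) else 0))"
    unfolding Gm_def by (simp add: sum.distrib distrib_left)
  also have "\<dots> = rowC a j"
    apply (subst sum_delta_cond_mult[where c = j and Q = "j \<in> {1..<n}"], simp, fastforce)
    apply (subst sum_delta_cond_mult[where c = "j-1" and Q = "1 \<le> j \<and> j - 1 \<in> {1..<n}"], simp, fastforce)
    apply (subst sum_delta_cond_mult[where c = "j+1" and Q = "j \<in> {1..<n}"], simp, fastforce)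
    apply (subst sum_delta_cond_mult[where c = "j" and Q = "j - 1 \<in> {1..<n} \<and> 1 \<le> j"], simp, fastforce)
    using assms by (auto simp: rowC_def)
  finally show ?thesis .
qed

definition "Dsum j = (if j < n then Lint j else 0) + (if 2 \<le> j then Rint (j-1) else 0)"

lemma Dsum_pos: "1 \<le> j \<Longrightarrow> j \<le> n \<Longrightarrow> 0 < Dsum j"
  using piece_facts(1)[of j] piece_facts(2)[of "j-1"] n3
  unfolding Dsum_def by (cases "j < n"; cases "2 \<le> j") (auto simp: add_pos_nonneg add_nonneg_pos less_imp_le)

lemma key_row:
  assumes j: "1 \<le> j" "j \<le> n" and mx: "\<forall>l\<in>{1..n}. \<bar>a l\<bar> \<le> \<bar>a j\<bar>"
  shows "\<bar>a j\<bar> * Dsum j \<le> 4 * \<bar>rowC a j\<bar>"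
proof -
  define A where "A = \<bar>a j\<bar>"
  define D1 where "D1 = (if j < n then LLi j - LRi j else 0)"
  define D2 where "D2 = (if 2 \<le> j then RRi (j-1) - LRi (j-1) else 0)"
  have sq: "a j * a j = A * A" unfolding A_def by (rule abs_mult_self_eq[symmetric])
  have D1: "(if j < n then Lint j else 0) \<le> 4 * D1"
    using piece_facts(3)[of j] j unfolding D1_def by auto
  have D2: "(if 2 \<le> j then Rint (j-1) else 0) \<le> 4 * D2"
    using piece_facts(4)[of "j-1"] j unfolding D2_def by auto
  have t1: "A * A * D1 \<le> a j * (if j < n then a j * LLi j + a (j+1) * LRi j else 0)"
  proof (cases "j < n")
    case True
    have m1: "\<bar>a (j+1)\<bar> \<le> A" using mx True j unfolding A_def by auto
    have m2: "\<bar>a j\<bar> \<le> A" unfolding A_def by simp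
    have c0: "0 \<le> LRi j" using piece_facts(5)[of j] True j by simp
    have mb: "- (A*A*LRi j) \<le> a j * a (j+1) * LRi j" by (rule mixed_bound[OF m1 m2 c0])
    have e: "a j * (a j * LLi j + a (j+1) * LRi j) = (a j * a j) * LLi j + a j * a (j+1) * LRi j"
      by (simp add: distrib_left mult.assoc)
    have e2: "A * A * D1 = A*A*LLi j - A*A*LRi j" using True unfolding D1_def by (simp add: right_diff_distrib)
    show ?thesis using True e e2 mb sq by simp
  qed (simp add: D1_def)
  have t2: "A * A * D2 \<le> a j * (if 2 \<le> j then a (j-1) * LRi (j-1) + a j * RRi (j-1) else 0)"
  proof (cases "2 \<le> j")
    case True
    have "j - 1 \<in> {1..n}" using True j by auto
    hence m1: "\<bar>a (j-1)\<bar> \<le> A" using mx unfolding A_def by blast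
    have m2: "\<bar>a j\<bar> \<le> A" unfolding A_def by simp
    have c0: "0 \<le> LRi (j-1)" using piece_facts(5)[of "j-1"] True j by simp
    have mb: "- (A*A*LRi (j-1)) \<le> a j * a (j-1) * LRi (j-1)" by (rule mixed_bound[OF m1 m2 c0])
    have e: "a j * (a (j-1) * LRi (j-1) + a j * RRi (j-1)) = a j * a (j-1) * LRi (j-1) + (a j * a j) * RRi (j-1)"
      by (simp add: distrib_left mult.assoc)
    have e2: "A * A * D2 = A*A*RRi (j-1) - A*A*LRi (j-1)" using True unfolding D2_def by (simp add: right_diff_distrib)
    show ?thesis using True e e2 mb sq by simp
  qed (simp add: D2_def)
  have "A * A * (D1 + D2) \<le> a j * rowC a j"
    using t1 t2 unfolding rowC_def distrib_left by simp
  moreover have "a j * rowC a j \<le> A * \<bar>rowC a j\<bar>"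
    unfolding A_def abs_mult[symmetric] by (rule abs_ge_self)
  ultimately have c: "A * (A * (D1 + D2)) \<le> A * \<bar>rowC a j\<bar>" by (simp add: mult.assoc)
  have IDle: "Dsum j \<le> 4 * (D1 + D2)" using D1 D2 unfolding Dsum_def by simp
  have A0: "0 \<le> A" unfolding A_def by simp
  show ?thesis
  proof (cases "A = 0")
    case True thus ?thesis unfolding A_def by simp
  next
    case False
    hence Ap: "0 < A" using A0 by simp
    hence "A * (D1 + D2) \<le> \<bar>rowC a j\<bar>" using c by (simp add: mult_le_cancel_left)
    moreover have "A * Dsum j \<le> A * (4 * (D1 + D2))" using IDle A0 by (rule mult_left_mono)
    moreover have "A * (4 * (D1 + D2)) = 4 * (A * (D1 + D2))" by simp
    ultimately have "A * Dsum j \<le> 4 * \<bar>rowC a j\<bar>" by linarith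
    thus ?thesis unfolding A_def .
  qed
qed

lemma key:
  assumes "\<forall>j\<in>{1..n}. \<bar>rowC a j\<bar> \<le> M * Dsum j"
  shows "\<forall>l\<in>{1..n}. \<bar>a l\<bar> \<le> 4 * M"
proof -
  define m where "m = Max ((\<lambda>l. \<bar>a l\<bar>) ` {1..n})"
  have ne: "{1..n} \<noteq> {}" using n3 by simp
  have "m \<in> (\<lambda>l. \<bar>a l\<bar>) ` {1..n}" unfolding m_def using ne by (intro Max_in) auto
  then obtain j where j: "j \<in> {1..n}" "\<bar>a j\<bar> = m" by auto
  have mx: "\<forall>l\<in>{1..n}. \<bar>a l\<bar> \<le> \<bar>a j\<bar>" unfolding j(2) m_def by auto
  have "\<bar>a j\<bar> * Dsum j \<le> 4 * \<bar>rowC a j\<bar>" using key_row[OF _ _ mx] j by auto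
  also have "\<dots> \<le> 4 * (M * Dsum j)" using assms j by auto
  finally have "\<bar>a j\<bar> * Dsum j \<le> (4 * M) * Dsum j" by simp
  hence "\<bar>a j\<bar> \<le> 4 * M" using Dsum_pos[of j] j by (simp add: mult_le_cancel_right)
  thus ?thesis using mx by force
qed

end



context hs
begin

lemma hh_has:
  assumes "1 \<le> i" "i \<le> n" "1 \<le> j" "j \<le> n"
  shows "((\<lambda>x. hat n tt \<xi> i x * hat n tt \<xi> j x) has_integral gram n tt \<xi> i j) {tt 1..tt n}"
proof -
  have "((\<lambda>x. hat n tt \<xi> i x * hat n tt \<xi> j x) has_integral
     (\<Sum>k\<in>{1..<n}. integral {tt k..tt (k+1)} (\<lambda>x. ee i k x * ee j k x))) {tt 1..tt n}"
  proof (rule pieces_has_int)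
    fix k x assume "1 \<le> k" "k < n" "tt k \<le> x" "x \<le> tt (k+1)"
    thus "hat n tt \<xi> i x * hat n tt \<xi> j x = ee i k x * ee j k x"
      using hat_on[of k x i] hat_on[of k x j] assms by simp
  qed (auto intro!: continuous_on_mult ee_cont)
  thus ?thesis using gram_sum[OF assms] by simp
qed

lemma fh_has:
  assumes f: "continuous_on {tt 1..tt n} f" and j: "1 \<le> j" "j \<le> n"
  shows "((\<lambda>x. f x * hat n tt \<xi> j x) has_integral
     (\<Sum>k\<in>{1..<n}. integral {tt k..tt (k+1)} (\<lambda>x. f x * ee j k x))) {tt 1..tt n}"
proof (rule pieces_has_int)
  fix k x assume "1 \<le> k" "k < n" "tt k \<le> x" "x \<le> tt (k+1)"
  thus "f x * hat n tt \<xi> j x = f x * ee j k x"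
    using hat_on[of k x j] j by simp
next
  fix k assume k: "1 \<le> k" "k < n"
  have "{tt k..tt (k+1)} \<subseteq> {tt 1..tt n}" using mono_le[of 1 k] mono_le[of "k+1" n] k by auto
  hence "continuous_on {tt k..tt (k+1)} f" using f continuous_on_subset by blast
  thus "continuous_on {tt k..tt (k+1)} (\<lambda>x. f x * ee j k x)"
    by (auto intro!: continuous_on_mult ee_cont)
qed

lemma fh_bound:
  assumes f: "continuous_on {tt 1..tt n} f" and j: "1 \<le> j" "j \<le> n"
    and M: "\<And>x. x \<in> {tt 1..tt n} \<Longrightarrow> \<bar>f x\<bar> \<le> M"
  shows "\<bar>integral {tt 1..tt n} (\<lambda>x. f x * hat n tt \<xi> j x)\<bar> \<le> M * Dsum j"
proof -
  have e: "integral {tt 1..tt n} (\<lambda>x. f x * hat n tt \<xi> j x) =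
     (\<Sum>k\<in>{1..<n}. integral {tt k..tt (k+1)} (\<lambda>x. f x * ee j k x))"
    using fh_has[OF f j] by (rule integral_unique)
  have b: "\<bar>integral {tt k..tt (k+1)} (\<lambda>x. f x * ee j k x)\<bar> \<le> M * integral {tt k..tt (k+1)} (ee j k)"
    if k: "k \<in> {1..<n}" for k
  proof -
    have sub: "{tt k..tt (k+1)} \<subseteq> {tt 1..tt n}" using mono_le[of 1 k] mono_le[of "k+1" n] k by auto
    hence "continuous_on {tt k..tt (k+1)} f" using f continuous_on_subset by blast
    hence i1: "(\<lambda>x. f x * ee j k x) integrable_on {tt k..tt (k+1)}"
      by (auto intro!: continuous_on_mult ee_cont integrable_continuous_interval)
    have i2: "(\<lambda>x. M * ee j k x) integrable_on {tt k..tt (k+1)}"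
      by (auto intro!: continuous_on_mult ee_cont integrable_continuous_interval continuous_on_const)
    have "norm (integral {tt k..tt (k+1)} (\<lambda>x. f x * ee j k x)) \<le> integral {tt k..tt (k+1)} (\<lambda>x. M * ee j k x)"
    proof (rule integral_norm_bound_integral[OF i1 i2])
      fix x assume x: "x \<in> {tt k..tt (k+1)}"
      have "0 \<le> ee j k x" using ee_nonneg[of k x j] k x by auto
      moreover have "\<bar>f x\<bar> \<le> M" using M sub x by auto
      ultimately show "norm (f x * ee j k x) \<le> M * ee j k x"
        by (simp add: abs_mult mult_right_mono)
    qed
    thus ?thesis by simp
  qed
  have "\<bar>integral {tt 1..tt n} (\<lambda>x. f x * hat n tt \<xi> j x)\<bar> \<le>
      (\<Sum>k\<in>{1..<n}. \<bar>integral {tt k..tt (k+1)} (\<lambda>x. f x * ee j k x)\<bar>)"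
    unfolding e by (rule sum_abs)
  also have "\<dots> \<le> (\<Sum>k\<in>{1..<n}. M * integral {tt k..tt (k+1)} (ee j k))"
    by (rule sum_mono) (rule b)
  also have "\<dots> = M * ((\<Sum>k\<in>{1..<n}. if j = k then Lint k else 0) + (\<Sum>k\<in>{1..<n}. if j = k+1 then Rint k else 0))"
    unfolding int_ee1 sum_distrib_left[symmetric] by (simp add: sum.distrib)
  also have "\<dots> = M * Dsum j"
    apply (subst sum_delta_cond[where c = j and Q = True], simp, fastforce)
    apply (subst sum_delta_cond[where c = "j-1" and Q = "1 \<le> j"], simp, fastforce)
    using j by (auto simp: Dsum_def)
  finally show ?thesis .
qed

lemma g_has:
  assumes g: "\<And>x. g x = (\<Sum>l=1..n. a l * hat n tt \<xi> l x)" and j: "1 \<le> j" "j \<le> n"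
  shows "((\<lambda>x. g x * hat n tt \<xi> j x) has_integral rowS a j) {tt 1..tt n}"
proof -
  have "((\<lambda>x. \<Sum>l\<in>{1..n}. a l * (hat n tt \<xi> l x * hat n tt \<xi> j x)) has_integral
     (\<Sum>l\<in>{1..n}. a l * gram n tt \<xi> l j)) {tt 1..tt n}"
  proof (rule has_integral_sum)
    fix l assume l: "l \<in> {1..n}"
    show "((\<lambda>x. a l * (hat n tt \<xi> l x * hat n tt \<xi> j x)) has_integral a l * gram n tt \<xi> l j) {tt 1..tt n}"
      by (rule has_integral_mult_right[OF hh_has]) (use j l in auto)
  qed simp
  moreover have "(\<lambda>x. \<Sum>l\<in>{1..n}. a l * (hat n tt \<xi> l x * hat n tt \<xi> j x)) = (\<lambda>x. g x * hat n tt \<xi> j x)"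
    by (auto simp: g sum_distrib_right mult.assoc)
  ultimately show ?thesis unfolding rowS_def by simp
qed

lemma hat_span_hat:
  assumes "1 \<le> i" "i \<le> n" shows "hat n tt \<xi> i \<in> hat_span n tt \<xi>"
proof -
  have "hat n tt \<xi> i x = (\<Sum>j=1..n. (if j = i then 1 else 0) * hat n tt \<xi> j x)" for x
  proof -
    have "(\<Sum>j=1..n. (if j = i then 1 else 0) * hat n tt \<xi> j x) = (\<Sum>j\<in>{1..n}. if j = i then hat n tt \<xi> j x else 0)"
      by (rule sum.cong) auto
    also have "\<dots> = hat n tt \<xi> i x" using assms by (simp add: sum.delta)
    finally show ?thesis by simp
  qed
  hence "\<forall>x. hat n tt \<xi> i x = (\<Sum>j=1..n. (\<lambda>j. if j = i then 1 else 0) j * hat n tt \<xi> j x)" by simp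
  hence "\<exists>a. \<forall>x. hat n tt \<xi> i x = (\<Sum>j=1..n. a j * hat n tt \<xi> j x)"
    by (rule exI[of _ "\<lambda>j. if j = i then (1::real) else 0"])
  thus ?thesis unfolding hat_span_def by simp
qed

lemma orth_rows:
  assumes f: "continuous_on {tt 1..tt n} f" and P: "is_orth_proj n tt \<xi> f g"
    and g: "\<And>x. g x = (\<Sum>l=1..n. a l * hat n tt \<xi> l x)" and j: "1 \<le> j" "j \<le> n"
  shows "rowS a j = integral {tt 1..tt n} (\<lambda>x. f x * hat n tt \<xi> j x)"
proof -
  have o: "integral {tt 1..tt n} (\<lambda>x. (f x - g x) * hat n tt \<xi> j x) = 0"
    using P hat_span_hat[OF j] unfolding is_orth_proj_def by blast
  have i1: "(\<lambda>x. f x * hat n tt \<xi> j x) integrable_on {tt 1..tt n}" using fh_has[OF f j] by blast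
  have "((\<lambda>x. f x * hat n tt \<xi> j x - g x * hat n tt \<xi> j x) has_integral
     (integral {tt 1..tt n} (\<lambda>x. f x * hat n tt \<xi> j x) - rowS a j)) {tt 1..tt n}"
    by (rule has_integral_diff[OF integrable_integral[OF i1] g_has[OF g j]])
  moreover have "(\<lambda>x. f x * hat n tt \<xi> j x - g x * hat n tt \<xi> j x) = (\<lambda>x. (f x - g x) * hat n tt \<xi> j x)"
    by (auto simp: left_diff_distrib)
  ultimately have "integral {tt 1..tt n} (\<lambda>x. (f x - g x) * hat n tt \<xi> j x) =
      integral {tt 1..tt n} (\<lambda>x. f x * hat n tt \<xi> j x) - rowS a j"
    using integral_unique by metis
  thus ?thesis using o by simp
qed

lemma rowS_diff: "rowS (\<lambda>l. a l - b l) j = rowS a j - rowS b j"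
  unfolding rowS_def by (simp add: left_diff_distrib sum_subtractf)

lemma unique_coeffs:
  assumes "\<forall>j\<in>{1..n}. rowS a j = rowS b j"
  shows "\<forall>l\<in>{1..n}. a l = b l"
proof -
  have "\<forall>j\<in>{1..n}. \<bar>rowC (\<lambda>l. a l - b l) j\<bar> \<le> 0 * Dsum j"
    using assms by (auto simp: row_eq[symmetric] rowS_diff)
  from key[OF this] show ?thesis by auto
qed

lemma g_bound:
  assumes g: "\<And>x. g x = (\<Sum>l=1..n. a l * hat n tt \<xi> l x)"
    and a: "\<forall>l\<in>{1..n}. \<bar>a l\<bar> \<le> B" and x: "tt 1 \<le> x" "x \<le> tt n"
  shows "\<bar>g x\<bar> \<le> B"
proof -
  obtain k where k: "1 \<le> k" "k < n" "tt k \<le> x" "x \<le> tt (k+1)" using cover[OF x] by auto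
  have "g x = (\<Sum>l\<in>{1..n}. a l * ee l k x)"
    unfolding g using hat_on[OF k] by (intro sum.cong) auto
  also have "\<dots> = (\<Sum>l\<in>{1..n}. a l * (if l = k then LL k x else 0)) + (\<Sum>l\<in>{1..n}. a l * (if l = k+1 then RR k x else 0))"
    unfolding ee_def by (simp add: sum.distrib[symmetric] distrib_left[symmetric] cong: if_cong) (rule sum.cong, auto)
  also have "\<dots> = a k * LL k x + a (k+1) * RR k x"
    apply (subst sum_delta_cond_mult[where c = k and Q = True], simp, fastforce)
    apply (subst sum_delta_cond_mult[where c = "k+1" and Q = True], simp, fastforce)
    using k by simp
  finally have ge: "g x = a k * LL k x + a (k+1) * RR k x" .
  have p: "0 \<le> LL k x" "0 \<le> RR k x" "LL k x + RR k x \<le> 1" using pointwise[OF k] by auto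
  have ak: "\<bar>a k\<bar> \<le> B" "\<bar>a (k+1)\<bar> \<le> B" using a k by auto
  have "\<bar>g x\<bar> \<le> \<bar>a k\<bar> * LL k x + \<bar>a (k+1)\<bar> * RR k x"
    unfolding ge using p by (simp add: abs_mult abs_triangle_ineq[THEN order_trans])
  also have "\<dots> \<le> B * LL k x + B * RR k x"
    using ak p by (intro add_mono mult_right_mono) auto
  also have "\<dots> \<le> B"
  proof -
    have "0 \<le> B" using ak by linarith
    hence "B * (LL k x + RR k x) \<le> B * 1" using p by (intro mult_left_mono) auto
    thus ?thesis by (simp add: distrib_left)
  qed
  finally show ?thesis .
qed

end



context hs
begin

definition toA :: "real Matrix.vec \<Rightarrow> nat \<Rightarrow> real" where
  "toA v = (\<lambda>l. if 1 \<le> l \<and> l \<le> n then vec_index v (l-1) else 0)"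

lemma solve: "\<exists>a. \<forall>j\<in>{1..n}. rowS a j = bv j"
proof -
  define A where "A = Matrix.mat n n (\<lambda>(i, l). gram n tt \<xi> (l+1) (i+1))"
  have A: "A \<in> carrier_mat n n" unfolding A_def by simp
  have rowv: "vec_index (A *\<^sub>v v) j = rowS (toA v) (j+1)" if v: "v \<in> carrier_vec n" and j: "j < n" for v j
  proof -
    have dv: "dim_vec v = n" using v by simp
    have "vec_index (A *\<^sub>v v) j = (\<Sum>i\<in>{0..<n}. gram n tt \<xi> (i+1) (j+1) * vec_index v i)"
      using j dv by (simp add: A_def scalar_prod_def)
    also have "\<dots> = (\<Sum>i<n. toA v (Suc i) * gram n tt \<xi> (Suc i) (j+1))"
      by (simp add: atLeast0LessThan toA_def mult.commute)
    also have "\<dots> = rowS (toA v) (j+1)"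
      unfolding rowS_def by (simp add: sum.atLeast1_atMost_eq)
    finally show ?thesis .
  qed
  have det: "Determinant.det A \<noteq> 0"
  proof
    assume "Determinant.det A = 0"
    then obtain v where v: "v \<in> carrier_vec n" "v \<noteq> 0\<^sub>v n" "A *\<^sub>v v = 0\<^sub>v n"
      using det_0_iff_vec_prod_zero_field[OF A] by auto
    have "\<forall>j\<in>{1..n}. \<bar>rowC (toA v) j\<bar> \<le> 0 * Dsum j"
    proof
      fix j assume j: "j \<in> {1..n}"
      have jn: "j - 1 < n" using j by auto
      have "rowC (toA v) j = rowS (toA v) ((j-1)+1)" using j by (simp add: row_eq)
      also have "\<dots> = vec_index (A *\<^sub>v v) (j-1)" using rowv[OF v(1) jn] by simp
      also have "\<dots> = 0" using v(3) jn by simp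
      finally show "\<bar>rowC (toA v) j\<bar> \<le> 0 * Dsum j" by simp
    qed
    from key[OF this] have z: "\<forall>l\<in>{1..n}. toA v l = 0" by auto
    have "v = 0\<^sub>v n"
    proof (rule eq_vecI)
      fix i assume "i < dim_vec (0\<^sub>v n :: real Matrix.vec)"
      hence i: "i < n" by simp
      have "toA v (i+1) = 0" using z i by auto
      thus "vec_index v i = vec_index (0\<^sub>v n) i" using i by (simp add: toA_def)
    qed (use v in simp)
    thus False using v(2) by simp
  qed
  have "A \<in> Units (ring_mat TYPE(real) n ())" by (rule det_non_zero_imp_unit[OF A det])
  then obtain B where B: "B \<in> carrier_mat n n" "A * B = 1\<^sub>m n"
    unfolding Units_def by (auto simp: ring_mat_simps)
  define w where "w = Matrix.vec n (\<lambda>i. bv (i+1))"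
  define v where "v = B *\<^sub>v w"
  have w: "w \<in> carrier_vec n" unfolding w_def by simp
  have v: "v \<in> carrier_vec n" unfolding v_def using B(1) w by simp
  have Av: "A *\<^sub>v v = w" unfolding v_def
    using assoc_mult_mat_vec[OF A B(1) w, symmetric] B(2) w by simp
  show ?thesis
  proof (rule exI[of _ "toA v"], intro ballI)
    fix j assume j: "j \<in> {1..n}"
    have jn: "j - 1 < n" using j by auto
    have "rowS (toA v) j = rowS (toA v) ((j-1)+1)" using j by simp
    also have "\<dots> = vec_index (A *\<^sub>v v) (j-1)" using rowv[OF v jn] by simp
    also have "\<dots> = bv j" using jn j by (simp add: Av w_def)
    finally show "rowS (toA v) j = bv j" .
  qed
qed

lemma diag_dom_row:
  assumes j: "1 \<le> j" "j \<le> n"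
  shows "(if j = 1 then 0 else \<bar>gram n tt \<xi> (j - 1) j\<bar>) + (if j = n then 0 else \<bar>gram n tt \<xi> j (j + 1)\<bar>)
           < \<bar>gram n tt \<xi> j j\<bar>" (is "?L < ?R")
    and "0 < \<bar>gram n tt \<xi> j j\<bar>"
proof -
  define D1 where "D1 = (if j < n then LLi j - LRi j else 0)"
  define D2 where "D2 = (if 2 \<le> j then RRi (j-1) - LRi (j-1) else 0)"
  have D1: "(if j < n then Lint j else 0) \<le> 4 * D1" and D10: "0 \<le> (if j < n then LRi j else 0)"
    using piece_facts(3,5)[of j] j unfolding D1_def by auto
  have D2: "(if 2 \<le> j then Rint (j-1) else 0) \<le> 4 * D2" and D20: "0 \<le> (if 2 \<le> j then LRi (j-1) else 0)"
    using piece_facts(4,5)[of "j-1"] j unfolding D2_def by auto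
  have ds: "0 < Dsum j" using Dsum_pos j by simp
  have L: "?L = (if 2 \<le> j then LRi (j-1) else 0) + (if j < n then LRi j else 0)"
  proof -
    have "(if j = 1 then 0 else \<bar>gram n tt \<xi> (j - 1) j\<bar>) = (if 2 \<le> j then LRi (j-1) else 0)"
      using gram_down[of j] piece_facts(5)[of "j-1"] j by auto
    moreover have "(if j = n then 0 else \<bar>gram n tt \<xi> j (j + 1)\<bar>) = (if j < n then LRi j else 0)"
      using gram_up[of j] piece_facts(5)[of j] j by auto
    ultimately show ?thesis by simp
  qed
  have G: "gram n tt \<xi> j j = (if 2 \<le> j then LRi (j-1) else 0) + (if j < n then LRi j else 0) + D1 + D2"
    unfolding gram_diag[OF j] D1_def D2_def by auto
  have "0 < D1 + D2" using D1 D2 ds unfolding Dsum_def by simp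
  hence pos: "0 < gram n tt \<xi> j j" using G D10 D20 by simp
  show "?L < ?R" unfolding L using G pos \<open>0 < D1 + D2\<close> by simp
  show "0 < \<bar>gram n tt \<xi> j j\<bar>" using pos by simp
qed

lemma rdd: "row_diag_dominant n (gram n tt \<xi>)"
proof -
  define Lf where "Lf j = (if j = 1 then 0 else \<bar>gram n tt \<xi> (j - 1) j\<bar>) + (if j = n then 0 else \<bar>gram n tt \<xi> j (j + 1)\<bar>)" for j
  define rf where "rf j = Lf j / \<bar>gram n tt \<xi> j j\<bar>" for j
  let ?L = Lf
  let ?r = rf
  define c where "c = Max (insert (1/2) (?r ` {1..n}))"
  have fin: "finite (insert (1/2) (?r ` {1..n}))" by simp
  have c1: "c < 1" unfolding c_def
  proof (subst Max_less_iff[OF fin], simp, intro ballI)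
    fix y assume "y \<in> insert (1/2) (?r ` {1..n})"
    then consider "y = 1/2" | j where "j \<in> {1..n}" "y = ?r j" by auto
    thus "y < 1"
    proof cases
      case 2
      thus ?thesis using diag_dom_row[of j] unfolding rf_def Lf_def by (simp add: divide_less_eq)
    qed simp
  qed
  have c0: "1/2 \<le> c" unfolding c_def using fin by (intro Max_ge) auto
  show ?thesis unfolding row_diag_dominant_def
  proof (intro exI[of _ c] conjI ballI)
    show "0 < c" using c0 by simp
    show "c < 1" by (rule c1)
    fix j assume j: "j \<in> {1..n}"
    have rc: "?r j \<le> c" unfolding c_def using fin j by (intro Max_ge) auto
    have p: "0 < \<bar>gram n tt \<xi> j j\<bar>" using diag_dom_row(2)[of j] j by simp
    have "?L j = ?r j * \<bar>gram n tt \<xi> j j\<bar>" using p unfolding rf_def by simp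
    also have "\<dots> \<le> c * \<bar>gram n tt \<xi> j j\<bar>" using rc p by (simp add: mult_right_mono)
    finally show "(if j = 1 then 0 else \<bar>gram n tt \<xi> (j - 1) j\<bar>) + (if j = n then 0 else \<bar>gram n tt \<xi> j (j + 1)\<bar>)
      \<le> c * \<bar>gram n tt \<xi> j j\<bar>" unfolding Lf_def .
  qed
qed

lemma proj_part:
  assumes f: "continuous_on {tt 1..tt n} f"
  shows "(\<exists>g. is_orth_proj n tt \<xi> f g
             \<and> (\<forall>g'. is_orth_proj n tt \<xi> f g' \<longrightarrow> (\<forall>x\<in>{tt 1..tt n}. g' x = g x)))
          \<and> (\<forall>g. is_orth_proj n tt \<xi> f g \<longrightarrow>
               (SUP x\<in>{tt 1..tt n}. \<bar>g x\<bar>) \<le> 4 * (SUP x\<in>{tt 1..tt n}. \<bar>f x\<bar>))"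
proof -
  define bv where "bv j = integral {tt 1..tt n} (\<lambda>x. f x * hat n tt \<xi> j x)" for j
  obtain a where a: "\<forall>j\<in>{1..n}. rowS a j = bv j" using solve by blast
  define g where "g x = (\<Sum>l=1..n. a l * hat n tt \<xi> l x)" for x
  have gP: "is_orth_proj n tt \<xi> f g"
    unfolding is_orth_proj_def
  proof (intro conjI ballI)
    show "g \<in> hat_span n tt \<xi>" unfolding hat_span_def g_def by blast
    fix h assume "h \<in> hat_span n tt \<xi>"
    then obtain c where c: "\<And>x. h x = (\<Sum>j=1..n. c j * hat n tt \<xi> j x)" unfolding hat_span_def by blast
    have hi: "((\<lambda>x. \<Sum>j\<in>{1..n}. c j * ((f x - g x) * hat n tt \<xi> j x)) has_integral (\<Sum>j\<in>{1..n}. c j * 0)) {tt 1..tt n}"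
    proof (rule has_integral_sum)
      fix j assume j: "j \<in> {1..n}"
      have j': "1 \<le> j" "j \<le> n" using j by auto
      have i1: "(\<lambda>x. f x * hat n tt \<xi> j x) integrable_on {tt 1..tt n}" using fh_has[OF f j'] by blast
      have "((\<lambda>x. f x * hat n tt \<xi> j x - g x * hat n tt \<xi> j x) has_integral (bv j - rowS a j)) {tt 1..tt n}"
        unfolding bv_def by (rule has_integral_diff[OF integrable_integral[OF i1] g_has[OF g_def j']])
      moreover have "(\<lambda>x. f x * hat n tt \<xi> j x - g x * hat n tt \<xi> j x) = (\<lambda>x. (f x - g x) * hat n tt \<xi> j x)"
        by (auto simp: left_diff_distrib)
      ultimately have "((\<lambda>x. (f x - g x) * hat n tt \<xi> j x) has_integral 0) {tt 1..tt n}"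
        using a j by simp
      thus "((\<lambda>x. c j * ((f x - g x) * hat n tt \<xi> j x)) has_integral c j * 0) {tt 1..tt n}"
        by (rule has_integral_mult_right)
    qed simp
    have e: "(\<lambda>x. \<Sum>j\<in>{1..n}. c j * ((f x - g x) * hat n tt \<xi> j x)) = (\<lambda>x. (f x - g x) * h x)"
    proof
      fix x
      show "(\<Sum>j\<in>{1..n}. c j * ((f x - g x) * hat n tt \<xi> j x)) = (f x - g x) * h x"
        unfolding c sum_distrib_left by (rule sum.cong) (simp_all add: mult.left_commute)
    qed
    have "integral {tt 1..tt n} (\<lambda>x. (f x - g x) * h x) = (\<Sum>j\<in>{1..n}. c j * 0)"
      using integral_unique[OF hi] unfolding e .
    thus "integral {tt 1..tt n} (\<lambda>x. (f x - g x) * h x) = 0" by simp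
  qed
  have coeffs: "\<exists>a'. (\<forall>x. g' x = (\<Sum>l=1..n. a' l * hat n tt \<xi> l x)) \<and> (\<forall>j\<in>{1..n}. rowS a' j = bv j)"
    if P: "is_orth_proj n tt \<xi> f g'" for g'
  proof -
    obtain a' where a': "\<And>x. g' x = (\<Sum>l=1..n. a' l * hat n tt \<xi> l x)"
      using P unfolding is_orth_proj_def hat_span_def by blast
    have "\<forall>j\<in>{1..n}. rowS a' j = bv j" using orth_rows[OF f P a'] unfolding bv_def by auto
    thus ?thesis using a' by blast
  qed
  have uniq: "\<forall>g'. is_orth_proj n tt \<xi> f g' \<longrightarrow> (\<forall>x\<in>{tt 1..tt n}. g' x = g x)"
  proof (intro allI impI ballI)
    fix g' x assume P: "is_orth_proj n tt \<xi> f g'"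
    then obtain a' where a': "\<forall>x. g' x = (\<Sum>l=1..n. a' l * hat n tt \<xi> l x)" "\<forall>j\<in>{1..n}. rowS a' j = bv j"
      using coeffs by blast
    have eq: "\<forall>l\<in>{1..n}. a' l = a l" using unique_coeffs a'(2) a by simp
    have "g' x = (\<Sum>l=1..n. a' l * hat n tt \<xi> l x)" using a'(1) by blast
    also have "\<dots> = (\<Sum>l=1..n. a l * hat n tt \<xi> l x)" using eq by (intro sum.cong) auto
    finally show "g' x = g x" unfolding g_def .
  qed
  have bnd: "(SUP x\<in>{tt 1..tt n}. \<bar>g' x\<bar>) \<le> 4 * (SUP x\<in>{tt 1..tt n}. \<bar>f x\<bar>)"
    if P: "is_orth_proj n tt \<xi> f g'" for g'
  proof -
    let ?S = "{tt 1..tt n}"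
    let ?M = "SUP x\<in>?S. \<bar>f x\<bar>"
    have ne: "?S \<noteq> {}" using mono_le[of 1 n] n3 by auto
    have "compact (f ` ?S)" by (rule compact_continuous_image[OF f compact_Icc])
    then obtain B where B: "\<forall>y\<in>f ` ?S. norm y \<le> B" using compact_imp_bounded[of "f ` ?S"] unfolding bounded_iff by blast
    have bdd: "bdd_above ((\<lambda>x. \<bar>f x\<bar>) ` ?S)" using B by (intro bdd_aboveI2[of _ _ B]) auto
    have fM: "\<bar>f x\<bar> \<le> ?M" if "x \<in> ?S" for x using cSUP_upper[OF that bdd] .
    obtain a' where a': "\<forall>x. g' x = (\<Sum>l=1..n. a' l * hat n tt \<xi> l x)" "\<forall>j\<in>{1..n}. rowS a' j = bv j"
      using coeffs[OF P] by blast
    have "\<forall>j\<in>{1..n}. \<bar>rowC a' j\<bar> \<le> ?M * Dsum j"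
    proof
      fix j assume j: "j \<in> {1..n}"
      have "rowC a' j = bv j" using a'(2) j row_eq[of j a'] by auto
      thus "\<bar>rowC a' j\<bar> \<le> ?M * Dsum j" unfolding bv_def using fh_bound[OF f _ _ fM] j by auto
    qed
    from key[OF this] have ab: "\<forall>l\<in>{1..n}. \<bar>a' l\<bar> \<le> 4 * ?M" .
    have "\<bar>g' x\<bar> \<le> 4 * ?M" if "x \<in> ?S" for x
      using g_bound[of g' a' "4 * ?M" x] a'(1) ab that by auto
    thus ?thesis using ne by (intro cSUP_least) auto
  qed
  have "\<exists>g. is_orth_proj n tt \<xi> f g
             \<and> (\<forall>g'. is_orth_proj n tt \<xi> f g' \<longrightarrow> (\<forall>x\<in>{tt 1..tt n}. g' x = g x))"
    using gP uniq by blast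
  moreover have "\<forall>g. is_orth_proj n tt \<xi> f g \<longrightarrow>
               (SUP x\<in>{tt 1..tt n}. \<bar>g x\<bar>) \<le> 4 * (SUP x\<in>{tt 1..tt n}. \<bar>f x\<bar>)"
    using bnd by blast
  ultimately show ?thesis by (rule conjI)
qed

end

theorem mainTheorem16:
  fixes n :: nat and tt \<xi> :: "nat \<Rightarrow> real"
  assumes "n \<ge> 3"
    and "\<And>i. 1 \<le> i \<Longrightarrow> i < n \<Longrightarrow> tt i < tt (i + 1)"
  shows "row_diag_dominant n (gram n tt \<xi>)
    \<and> (\<forall>f. continuous_on {tt 1..tt n} f \<longrightarrow>
          (\<exists>g. is_orth_proj n tt \<xi> f g
             \<and> (\<forall>g'. is_orth_proj n tt \<xi> f g' \<longrightarrow> (\<forall>x\<in>{tt 1..tt n}. g' x = g x)))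
          \<and> (\<forall>g. is_orth_proj n tt \<xi> f g \<longrightarrow>
               (SUP x\<in>{tt 1..tt n}. \<bar>g x\<bar>) \<le> 4 * (SUP x\<in>{tt 1..tt n}. \<bar>f x\<bar>)))"
proof -
  interpret hs n tt \<xi> using assms by unfold_locales auto
  show ?thesis using rdd proj_part by blast
qed

end
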